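(* Let $\mathcal M_1,\mathcal M_2,\dots$ be LMCs $\mathcal M_i=(S,L,\tau_i,\ell)$ sharing the state set, label set and labelling. Suppose that for each $s\in S$ there is a finite set $N(s)\subseteq S$ with $\mathrm{support}(\tau_i(s))\subseteq N(s)$ for all $i$. Let $S_0\subseteq S$ be finite with $\liminf_{i\to\infty}\max\{d_{\mathcal M_i}(s,t):s,t\in S_0\}=0$, and put $N=\bigcup_{s\in S_0}N(s)$. Then there exist a function $\tau:S_0\to\mathrm{Distr}(S)$, a partition $\{S_1,\dots,S_k\}$ of $N$, and a distribution $\mu$ on $\{1,\dots,k\}$ such that $\tau(s)(S_j)=\mu(j)$ for all $s\in S_0$ and $1\le j\le k$, and \[\liminf_{i\to\infty}\max\Big(\{|\tau_i(s)-\tau(s)|:s\in S_0\}\cup\{|\tau_i(s)(S_j)-\mu(j)|:s\in S_0,1\le j\le k\}\cup\{d_{\mathcal M_i}(u,v):1\le j\le k,\ u,v\in S_j\}\Big)=0.\]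
   Context: An LMC $(S,L,\tau,\ell)$ has a nonempty countable state set $S$, finite label set $L$, finitely-branching transition function $\tau:S\to\mathrm{Distr}(S)$ and labelling $\ell:S\to L$. Its probabilistic bisimilarity distance $d$ is the least fixed point of $\Delta(e)(s,t)=1$ if $\ell(s)\ne\ell(t)$, and $\Delta(e)(s,t)=\min_{\omega}\sum_{u,v}\omega(u,v)e(u,v)$ otherwise, the minimum over couplings $\omega\in\mathrm{Distr}(S\times S)$ with marginals $\tau(s)$ and $\tau(t)$. For finitely supported real vectors, $|\cdot|$ denotes the $L_1$ norm, so $|\tau_i(s)-\tau(s)|=\sum_{x\in S}|\tau_i(s)(x)-\tau(s)(x)|$; $\tau(s)(E)=\sum_{x\in E}\tau(s)(x)$. *)

theory Defs
  imports "HOL-Probability.Probability"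
begin

definition couplings :: "'a pmf \<Rightarrow> 'b pmf \<Rightarrow> ('a \<times> 'b) pmf set" where
  "couplings p q = {\<omega>. map_pmf fst \<omega> = p \<and> map_pmf snd \<omega> = q}"

definition Delta :: "('a \<Rightarrow> 'a pmf) \<Rightarrow> ('a \<Rightarrow> 'l) \<Rightarrow> ('a \<Rightarrow> 'a \<Rightarrow> real) \<Rightarrow> 'a \<Rightarrow> 'a \<Rightarrow> real" where
  "Delta tau lab e s t =
     (if lab s \<noteq> lab t then 1
      else (INF \<omega> \<in> couplings (tau s) (tau t). measure_pmf.expectation \<omega> (\<lambda>(u, v). e u v)))"

text \<open>Probabilistic bisimilarity distance: the least fixed point of Delta on the complete
  lattice of [0,1]-valued functions, written (Knaster--Tarski) as the pointwise infimum of
  the prefixed points.\<close>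
definition bisim_dist :: "('a \<Rightarrow> 'a pmf) \<Rightarrow> ('a \<Rightarrow> 'l) \<Rightarrow> 'a \<Rightarrow> 'a \<Rightarrow> real" where
  "bisim_dist tau lab s t =
     (INF e \<in> {e. (\<forall>u v. 0 \<le> e u v \<and> e u v \<le> 1) \<and> (\<forall>u v. Delta tau lab e u v \<le> e u v)}. e s t)"

definition l1_dist :: "'a pmf \<Rightarrow> 'a pmf \<Rightarrow> real" where
  "l1_dist p q = (\<Sum>\<^sub>\<infinity>x. \<bar>pmf p x - pmf q x\<bar>)"

end

theory Submission
  imports Defs
begin


lemma glue:
  fixes pq :: "('a \<times> 'b) pmf" and qr :: "('b \<times> 'c) pmf"
  assumes q: "map_pmf snd pq = map_pmf fst qr"
  shows "\<exists>\<nu>. map_pmf (\<lambda>(x,y,z). (x,y)) \<nu> = pq \<and> map_pmf (\<lambda>(x,y,z). (y,z)) \<nu> = qr"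
proof -
  define \<nu> where "\<nu> = bind_pmf pq (\<lambda>xy. bind_pmf (cond_pmf qr {yz. fst yz = snd xy})
          (\<lambda>yz. return_pmf (fst xy, snd xy, snd yz)))"
  have wd: "\<And>y. y \<in> set_pmf (map_pmf snd pq) \<Longrightarrow> set_pmf qr \<inter> {yz. fst yz = y} \<noteq> {}"
    unfolding q by force
  have 1: "map_pmf (\<lambda>(x,y,z). (x,y)) \<nu> = pq"
    unfolding \<nu>_def by (simp add: map_bind_pmf split_beta map_pmf_def[symmetric] map_pmf_comp)
  have "map_pmf (\<lambda>(x,y,z). (y,z)) \<nu> = bind_pmf pq (\<lambda>xy. cond_pmf qr {yz. fst yz = snd xy})"
    unfolding \<nu>_def map_bind_pmf
  proof (rule bind_pmf_cong[OF refl])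
    fix xy assume xy: "xy \<in> set_pmf pq"
    have ne: "set_pmf qr \<inter> {yz. fst yz = snd xy} \<noteq> {}" using wd xy by auto
    have "bind_pmf (cond_pmf qr {yz. fst yz = snd xy}) (\<lambda>yz. map_pmf (\<lambda>(x, y, z). (y, z)) (return_pmf (fst xy, snd xy, snd yz)))
         = bind_pmf (cond_pmf qr {yz. fst yz = snd xy}) return_pmf"
        apply (rule bind_pmf_cong[OF refl])
        using ne by (auto simp: set_cond_pmf)
    then show "bind_pmf (cond_pmf qr {yz. fst yz = snd xy}) (\<lambda>yz. map_pmf (\<lambda>(x, y, z). (y, z)) (return_pmf (fst xy, snd xy, snd yz)))
         = cond_pmf qr {yz. fst yz = snd xy}" by (simp add: bind_return_pmf')
  qed
  also have "\<dots> = bind_pmf (map_pmf snd pq) (\<lambda>y. cond_pmf qr {yz. fst yz = y})"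
    by (simp add: bind_map_pmf)
  also have "\<dots> = qr"
    unfolding q by (rule bind_cond_pmf_cancel) (auto simp: eq_commute vimage_def)
  finally show ?thesis using 1 by blast
qed

definition Eset :: "('a \<Rightarrow> 'a pmf) \<Rightarrow> ('a \<Rightarrow> 'l) \<Rightarrow> ('a \<Rightarrow> 'a \<Rightarrow> real) set" where
  "Eset tau lab = {e. (\<forall>u v. 0 \<le> e u v \<and> e u v \<le> 1) \<and> (\<forall>u v. Delta tau lab e u v \<le> e u v)}"

lemma bisim_dist_Eset: "bisim_dist tau lab s t = (INF e \<in> Eset tau lab. e s t)"
  unfolding bisim_dist_def Eset_def by simp

lemma coup_set: assumes "\<omega> \<in> couplings p q" shows "set_pmf \<omega> \<subseteq> set_pmf p \<times> set_pmf q"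
proof -
  have "set_pmf p = fst ` set_pmf \<omega>" "set_pmf q = snd ` set_pmf \<omega>"
    using assms by (auto simp: couplings_def simp flip: set_map_pmf)
  then show ?thesis by force
qed

lemma coup_fin: assumes "\<omega> \<in> couplings p q" "finite (set_pmf p)" "finite (set_pmf q)"
  shows "finite (set_pmf \<omega>)"
  using coup_set[OF assms(1)] assms(2,3) by (meson finite_SigmaI finite_subset)

lemma pair_coup: "pair_pmf p q \<in> couplings p q"
  by (simp add: couplings_def map_fst_pair_pmf map_snd_pair_pmf)

lemma exp_bounds:
  fixes e :: "'b \<Rightarrow> 'c \<Rightarrow> real"
  assumes "finite (set_pmf \<omega>)" "\<forall>x y. 0 \<le> e x y \<and> e x y \<le> 1"
  shows "0 \<le> measure_pmf.expectation \<omega> (\<lambda>(u,v). e u v) \<and> measure_pmf.expectation \<omega> (\<lambda>(u,v). e u v) \<le> 1"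
proof
  show "0 \<le> measure_pmf.expectation \<omega> (\<lambda>(u,v). e u v)"
    using assms(2) by (intro Bochner_Integration.integral_nonneg) (auto split: prod.splits)
  have "measure_pmf.expectation \<omega> (\<lambda>(u,v). e u v) \<le> measure_pmf.expectation \<omega> (\<lambda>_. 1)"
    using assms by (intro integral_mono) (auto intro: integrable_measure_pmf_finite split: prod.splits)
  then show "measure_pmf.expectation \<omega> (\<lambda>(u,v). e u v) \<le> 1" by simp
qed

lemma Delta_bounds:
  assumes fin: "\<And>s. finite (set_pmf (tau s))" and e: "\<forall>x y. 0 \<le> e x y \<and> e x y \<le> 1"
  shows "0 \<le> Delta tau lab e s t \<and> Delta tau lab e s t \<le> 1"
proof (cases "lab s = lab t")
  case True
  let ?f = "\<lambda>\<omega>. measure_pmf.expectation \<omega> (\<lambda>(u,v). e u v)"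
  have b: "\<And>\<omega>. \<omega> \<in> couplings (tau s) (tau t) \<Longrightarrow> 0 \<le> ?f \<omega> \<and> ?f \<omega> \<le> 1"
    using exp_bounds coup_fin fin e by blast
  have bdd: "bdd_below (?f ` couplings (tau s) (tau t))" using b by (intro bdd_belowI2[where m=0]) blast
  have "0 \<le> (INF \<omega> \<in> couplings (tau s) (tau t). ?f \<omega>)"
    using b pair_coup by (intro cINF_greatest) auto
  moreover have "(INF \<omega> \<in> couplings (tau s) (tau t). ?f \<omega>) \<le> 1"
    using b[OF pair_coup] by (intro cINF_lower2[OF bdd pair_coup]) auto
  ultimately show ?thesis using True by (simp add: Delta_def)
qed (simp add: Delta_def)

lemma Delta_mono:
  assumes fin: "\<And>s. finite (set_pmf (tau s))" and e: "\<forall>x y. 0 \<le> e x y" and le: "\<forall>x y. e x y \<le> e' x y"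
  shows "Delta tau lab e s t \<le> Delta tau lab e' s t"
proof (cases "lab s = lab t")
  case True
  let ?f = "\<lambda>\<omega>. measure_pmf.expectation \<omega> (\<lambda>(u,v). e u v)"
  let ?g = "\<lambda>\<omega>. measure_pmf.expectation \<omega> (\<lambda>(u,v). e' u v)"
  have bdd: "bdd_below (?f ` couplings (tau s) (tau t))"
    using e by (intro bdd_belowI2[where m=0] Bochner_Integration.integral_nonneg) (auto split: prod.splits)
  have "(INF \<omega> \<in> couplings (tau s) (tau t). ?f \<omega>) \<le> (INF \<omega> \<in> couplings (tau s) (tau t). ?g \<omega>)"
  proof (rule cINF_mono)
    show "couplings (tau s) (tau t) \<noteq> {}" using pair_coup by blast
    fix m assume m: "m \<in> couplings (tau s) (tau t)"
    have "finite (set_pmf m)" using coup_fin[OF m fin fin] .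
    then have "?f m \<le> ?g m" using le
      by (intro integral_mono) (auto intro: integrable_measure_pmf_finite split: prod.splits)
    then show "\<exists>n\<in>couplings (tau s) (tau t). ?f n \<le> ?g m" using m by blast
  qed (rule bdd)
  then show ?thesis using True by (simp add: Delta_def)
qed (simp add: Delta_def)

context
  fixes tau :: "'a \<Rightarrow> 'a pmf" and lab :: "'a \<Rightarrow> 'l"
  assumes fin: "\<And>s. finite (set_pmf (tau s))"
begin

lemma one_E: "(\<lambda>u v. 1) \<in> Eset tau lab"
  using Delta_bounds[where tau=tau and e="\<lambda>u v. 1" and lab=lab] fin by (auto simp: Eset_def)

lemma bdd_E: "bdd_below ((\<lambda>e. e s t) ` Eset tau lab)"
  by (intro bdd_belowI2[where m=0]) (auto simp: Eset_def)

lemma d_bounds: "0 \<le> bisim_dist tau lab s t \<and> bisim_dist tau lab s t \<le> 1"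
proof
  show "0 \<le> bisim_dist tau lab s t" unfolding bisim_dist_Eset
  proof (rule cINF_greatest)
    show "Eset tau lab \<noteq> {}" using one_E by blast
  qed (auto simp: Eset_def)
  show "bisim_dist tau lab s t \<le> 1" unfolding bisim_dist_Eset
    by (rule cINF_lower2[OF bdd_E one_E]) simp
qed

lemma d_le: "e \<in> Eset tau lab \<Longrightarrow> bisim_dist tau lab s t \<le> e s t"
  unfolding bisim_dist_Eset by (rule cINF_lower[OF bdd_E])

lemma Delta_d: "Delta tau lab (bisim_dist tau lab) s t \<le> bisim_dist tau lab s t"
proof -
  have "Delta tau lab (bisim_dist tau lab) s t \<le> (INF e \<in> Eset tau lab. e s t)"
  proof (rule cINF_greatest)
    show "Eset tau lab \<noteq> {}" using one_E by blast
    fix e assume e: "e \<in> Eset tau lab"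
    have "Delta tau lab (bisim_dist tau lab) s t \<le> Delta tau lab e s t"
      using d_bounds d_le[OF e] by (intro Delta_mono[OF fin]) auto
    also have "\<dots> \<le> e s t" using e by (auto simp: Eset_def)
    finally show "Delta tau lab (bisim_dist tau lab) s t \<le> e s t" .
  qed
  then show ?thesis by (simp add: bisim_dist_Eset)
qed

lemma lab_diff: "lab s \<noteq> lab t \<Longrightarrow> bisim_dist tau lab s t = 1"
  using Delta_d[of s t] d_bounds[of s t] by (simp add: Delta_def)

lemma approx:
  assumes eps: "\<epsilon> > 0"
  shows "\<exists>\<omega>\<in>couplings (tau s) (tau t).
           measure_pmf.expectation \<omega> (\<lambda>(u,v). bisim_dist tau lab u v) \<le> bisim_dist tau lab s t + \<epsilon>"
proof (cases "lab s = lab t")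
  case True
  let ?f = "\<lambda>\<omega>. measure_pmf.expectation \<omega> (\<lambda>(u,v). bisim_dist tau lab u v)"
  have bdd: "bdd_below (?f ` couplings (tau s) (tau t))"
    using d_bounds by (intro bdd_belowI2[where m=0] Bochner_Integration.integral_nonneg) (auto split: prod.splits)
  have "(INF \<omega> \<in> couplings (tau s) (tau t). ?f \<omega>) < bisim_dist tau lab s t + \<epsilon>"
    using Delta_d[of s t] True eps by (simp add: Delta_def)
  then obtain \<omega> where "\<omega> \<in> couplings (tau s) (tau t)" "?f \<omega> < bisim_dist tau lab s t + \<epsilon>"
    using cINF_less_iff[OF _ bdd] pair_coup by blast
  then show ?thesis by (intro bexI[of _ \<omega>]) auto
next
  case False
  have "measure_pmf.expectation (pair_pmf (tau s) (tau t)) (\<lambda>(u,v). bisim_dist tau lab u v) \<le> 1"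
    using exp_bounds[OF coup_fin[OF pair_coup fin fin], of "bisim_dist tau lab"] d_bounds by blast
  then show ?thesis using lab_diff[OF False] eps pair_coup by (intro bexI[OF _ pair_coup]) auto
qed

lemma triangle: "bisim_dist tau lab u w \<le> bisim_dist tau lab u v + bisim_dist tau lab v w"
proof -
  let ?d = "bisim_dist tau lab"
  define e' where "e' = (\<lambda>x z. min 1 (INF y. ?d x y + ?d y z))"
  have bddI: "bdd_below (range (\<lambda>y. ?d x y + ?d y z))" for x z
    using d_bounds by (intro bdd_belowI2[where m=0]) (meson add_nonneg_nonneg)
  have e'_le: "e' x z \<le> ?d x y + ?d y z" for x y z
    unfolding e'_def using cINF_lower[OF bddI, of y x z] by (simp add: min.coboundedI2)
  have e'_b: "0 \<le> e' x z \<and> e' x z \<le> 1" for x z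
  proof -
    have "0 \<le> (INF y. ?d x y + ?d y z)"
      using d_bounds by (intro cINF_greatest) (auto intro: add_nonneg_nonneg)
    then show ?thesis unfolding e'_def by simp
  qed
  have Dl: "Delta tau lab e' x z \<le> ?d x y + ?d y z" for x y z
  proof (cases "lab x = lab z")
    case False
    then have "lab x \<noteq> lab y \<or> lab y \<noteq> lab z" by auto
    then have "1 \<le> ?d x y + ?d y z" using lab_diff d_bounds
      by (metis add.commute le_add_same_cancel1)
    then show ?thesis using False by (simp add: Delta_def)
  next
    case True
    let ?f = "\<lambda>\<omega>. measure_pmf.expectation \<omega> (\<lambda>(u,v). e' u v)"
    have bdd: "bdd_below (?f ` couplings (tau x) (tau z))"
      using e'_b by (intro bdd_belowI2[where m=0] Bochner_Integration.integral_nonneg) (auto split: prod.splits)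
    show ?thesis
    proof (rule field_le_epsilon)
      fix \<epsilon> :: real assume eps: "0 < \<epsilon>"
      obtain \<omega>1 where w1: "\<omega>1 \<in> couplings (tau x) (tau y)"
        "measure_pmf.expectation \<omega>1 (\<lambda>(u,v). ?d u v) \<le> ?d x y + \<epsilon>/2"
        using approx[of "\<epsilon>/2"] eps by auto
      obtain \<omega>2 where w2: "\<omega>2 \<in> couplings (tau y) (tau z)"
        "measure_pmf.expectation \<omega>2 (\<lambda>(u,v). ?d u v) \<le> ?d y z + \<epsilon>/2"
        using approx[of "\<epsilon>/2"] eps by auto
      have "map_pmf snd \<omega>1 = map_pmf fst \<omega>2" using w1 w2 by (simp add: couplings_def)
      then obtain \<nu> where nu: "map_pmf (\<lambda>(a,b,c). (a,b)) \<nu> = \<omega>1" "map_pmf (\<lambda>(a,b,c). (b,c)) \<nu> = \<omega>2"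
        using glue by blast
      have f1: "finite (set_pmf \<omega>1)" using coup_fin[OF w1(1) fin fin] .
      have f2: "finite (set_pmf \<omega>2)" using coup_fin[OF w2(1) fin fin] .
      have sub: "set_pmf \<nu> \<subseteq> fst ` set_pmf \<omega>1 \<times> snd ` set_pmf \<omega>1 \<times> snd ` set_pmf \<omega>2"
      proof
        fix p assume p: "p \<in> set_pmf \<nu>"
        obtain a b c where abc: "p = (a,b,c)" by (cases p) auto
        have "(a,b) \<in> set_pmf \<omega>1" using p abc unfolding nu(1)[symmetric] by force
        moreover have "(b,c) \<in> set_pmf \<omega>2" using p abc unfolding nu(2)[symmetric] by force
        ultimately show "p \<in> fst ` set_pmf \<omega>1 \<times> snd ` set_pmf \<omega>1 \<times> snd ` set_pmf \<omega>2"
          using abc by force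
      qed
      have fnu: "finite (set_pmf \<nu>)" using f1 f2 by (intro finite_subset[OF sub]) auto
      define \<omega> where "\<omega> = map_pmf (\<lambda>(a,b,c). (a,c)) \<nu>"
      have "map_pmf fst \<omega> = map_pmf fst \<omega>1" unfolding \<omega>_def nu(1)[symmetric]
        by (simp add: map_pmf_comp split_beta)
      moreover have "map_pmf snd \<omega> = map_pmf snd \<omega>2" unfolding \<omega>_def nu(2)[symmetric]
        by (simp add: map_pmf_comp split_beta)
      ultimately have wc: "\<omega> \<in> couplings (tau x) (tau z)" using w1 w2 by (simp add: couplings_def)
      have "Delta tau lab e' x z = (INF \<omega> \<in> couplings (tau x) (tau z). ?f \<omega>)"
        using True by (simp add: Delta_def)
      also have "\<dots> \<le> ?f \<omega>" by (rule cINF_lower[OF bdd wc])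
      also have "\<dots> = measure_pmf.expectation \<nu> (\<lambda>(a,b,c). e' a c)"
        unfolding \<omega>_def by (simp add: case_prod_unfold)
      also have "\<dots> \<le> measure_pmf.expectation \<nu> (\<lambda>(a,b,c). ?d a b + ?d b c)"
        using fnu e'_le by (intro integral_mono) (auto intro: integrable_measure_pmf_finite split: prod.splits)
      also have "\<dots> = measure_pmf.expectation \<nu> (\<lambda>(a,b,c). ?d a b) + measure_pmf.expectation \<nu> (\<lambda>(a,b,c). ?d b c)"
        using fnu by (subst Bochner_Integration.integral_add[symmetric])
          (auto intro: integrable_measure_pmf_finite simp: case_prod_unfold)
      also have "measure_pmf.expectation \<nu> (\<lambda>(a,b,c). ?d a b) = measure_pmf.expectation \<omega>1 (\<lambda>(u,v). ?d u v)"
        unfolding nu(1)[symmetric] by (simp add: case_prod_unfold)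
      also have "measure_pmf.expectation \<nu> (\<lambda>(a,b,c). ?d b c) = measure_pmf.expectation \<omega>2 (\<lambda>(u,v). ?d u v)"
        unfolding nu(2)[symmetric] by (simp add: case_prod_unfold)
      finally show "Delta tau lab e' x z \<le> ?d x y + ?d y z + \<epsilon>" using w1 w2 by linarith
    qed
  qed
  have "e' \<in> Eset tau lab"
  proof -
    have "Delta tau lab e' x z \<le> e' x z" for x z
    proof -
      have "Delta tau lab e' x z \<le> (INF y. ?d x y + ?d y z)"
        using Dl by (intro cINF_greatest) auto
      moreover have "Delta tau lab e' x z \<le> 1" using Delta_bounds[where tau=tau and e=e'] fin e'_b by blast
      ultimately show ?thesis unfolding e'_def by simp
    qed
    then show ?thesis using e'_b by (auto simp: Eset_def)
  qed
  then have "?d u w \<le> e' u w" by (rule d_le)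
  also have "\<dots> \<le> ?d u v + ?d v w" by (rule e'_le)
  finally show ?thesis .
qed

end




lemma finite_pmf_exists:
  fixes g :: "'a \<Rightarrow> real"
  assumes "finite A" "\<And>x. 0 \<le> g x" "\<And>x. x \<notin> A \<Longrightarrow> g x = 0" "sum g A = 1"
  shows "\<exists>p. \<forall>x. pmf p x = g x"
proof -
  have "(\<integral>\<^sup>+x. ennreal (g x) \<partial>count_space UNIV) = (\<integral>\<^sup>+x. ennreal (g x) * indicator A x \<partial>count_space UNIV)"
    using assms(3) by (intro nn_integral_cong) (auto split: split_indicator)
  also have "\<dots> = (\<integral>\<^sup>+x. ennreal (g x) \<partial>count_space A)"
    by (simp add: nn_integral_count_space_indicator)
  also have "\<dots> = (\<Sum>x\<in>A. ennreal (g x))" using assms(1) by (rule nn_integral_count_space_finite)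
  also have "\<dots> = ennreal (sum g A)" using assms(2) by (simp add: sum_ennreal)
  finally have "(\<integral>\<^sup>+x. ennreal (g x) \<partial>count_space UNIV) = 1" using assms(4) by simp
  then show ?thesis using pmf_embed_pmf[of g] assms(2) by blast
qed

lemma multi_subseq:
  fixes f :: "'b \<Rightarrow> nat \<Rightarrow> real"
  assumes "finite I" "\<And>i n. i \<in> I \<Longrightarrow> \<bar>f i n\<bar> \<le> B"
  shows "\<exists>r. strict_mono r \<and> (\<forall>i\<in>I. convergent (\<lambda>n. f i (r n)))"
  using assms
proof (induction I rule: finite_induct)
  case empty
  then show ?case by (intro exI[of _ id]) (auto simp: strict_mono_def)
next
  case (insert i I)
  then obtain r where r: "strict_mono r" "\<forall>i\<in>I. convergent (\<lambda>n. f i (r n))" by auto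
  have "range (\<lambda>n. f i (r n)) \<subseteq> cball 0 B" using insert.prems by auto
  then have "bounded (range (\<lambda>n. f i (r n)))" using bounded_cball bounded_subset by blast
  then obtain l r' where r': "strict_mono r'" "((\<lambda>n. f i (r n)) \<circ> r') \<longlonglongrightarrow> l"
    using bounded_imp_convergent_subsequence by blast
  have "strict_mono (r \<circ> r')" using r(1) r'(1) by (rule strict_mono_o)
  moreover have "convergent (\<lambda>n. f i ((r \<circ> r') n))"
    using r'(2) by (auto simp: convergent_def o_def)
  moreover have "convergent (\<lambda>n. f j ((r \<circ> r') n))" if "j \<in> I" for j
    using convergent_subseq_convergent[OF r(2)[rule_format, OF that] r'(1)] by (simp add: o_def)
  ultimately show ?case by blast
qed

context
  fixes tau :: "'a \<Rightarrow> 'a pmf" and lab :: "'a \<Rightarrow> 'l"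
  assumes fin: "\<And>s. finite (set_pmf (tau s))"
begin

lemma d_refl: "bisim_dist tau lab u u = 0"
proof -
  define e0 where "e0 = (\<lambda>x y :: 'a. if x = y then 0 else (1::real))"
  have "Delta tau lab e0 x y \<le> e0 x y" for x y
  proof (cases "x = y")
    case True
    let ?f = "\<lambda>\<omega>. measure_pmf.expectation \<omega> (\<lambda>(u,v). e0 u v)"
    have bdd: "bdd_below (?f ` couplings (tau x) (tau x))"
      by (intro bdd_belowI2[where m=0] Bochner_Integration.integral_nonneg) (auto simp: e0_def split: prod.splits)
    have c: "map_pmf (\<lambda>a. (a,a)) (tau x) \<in> couplings (tau x) (tau x)"
      by (simp add: couplings_def map_pmf_comp)
    have "(INF \<omega> \<in> couplings (tau x) (tau x). ?f \<omega>) \<le> ?f (map_pmf (\<lambda>a. (a,a)) (tau x))"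
      by (rule cINF_lower[OF bdd c])
    also have "\<dots> = 0" by (simp add: e0_def)
    finally show ?thesis using True by (simp add: Delta_def e0_def)
  next
    case False
    then show ?thesis using Delta_bounds[where tau=tau and e=e0 and lab=lab] fin by (auto simp: e0_def)
  qed
  then have "e0 \<in> Eset tau lab" by (auto simp: Eset_def e0_def)
  then have "bisim_dist tau lab u u \<le> e0 u u" by (rule d_le[where tau=tau, OF fin])
  then have "bisim_dist tau lab u u \<le> 0" by (simp add: e0_def)
  then show ?thesis using d_bounds[where tau=tau and lab=lab and s=u and t=u, OF fin] by simp
qed

lemma swap_coup: "\<omega> \<in> couplings p q \<Longrightarrow> map_pmf prod.swap \<omega> \<in> couplings q p"
proof -
  assume w: "\<omega> \<in> couplings p q"
  have "map_pmf fst (map_pmf prod.swap \<omega>) = map_pmf snd \<omega>" "map_pmf snd (map_pmf prod.swap \<omega>) = map_pmf fst \<omega>"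
    by (simp_all add: map_pmf_comp)
  then show ?thesis using w unfolding couplings_def by simp
qed

lemma swap_swap_pmf: "map_pmf prod.swap (map_pmf prod.swap \<omega>) = \<omega>"
  by (simp add: map_pmf_comp)

lemma Delta_swap: "Delta tau lab (\<lambda>a b. e b a) u v = Delta tau lab e v u"
proof -
  have img: "couplings (tau v) (tau u) = map_pmf prod.swap ` couplings (tau u) (tau v)"
  proof
    show "couplings (tau v) (tau u) \<subseteq> map_pmf prod.swap ` couplings (tau u) (tau v)"
    proof
      fix \<omega> assume w: "\<omega> \<in> couplings (tau v) (tau u)"
      have "\<omega> = map_pmf prod.swap (map_pmf prod.swap \<omega>)" by (rule swap_swap_pmf[symmetric])
      moreover have "map_pmf prod.swap \<omega> \<in> couplings (tau u) (tau v)"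
        using w by (rule swap_coup)
      ultimately show "\<omega> \<in> map_pmf prod.swap ` couplings (tau u) (tau v)" by blast
    qed
    show "map_pmf prod.swap ` couplings (tau u) (tau v) \<subseteq> couplings (tau v) (tau u)"
      using swap_coup by blast
  qed
  have "\<And>\<omega>. measure_pmf.expectation (map_pmf prod.swap \<omega>) (\<lambda>(a,b). e a b)
      = measure_pmf.expectation \<omega> (\<lambda>(a,b). e b a)"
    by (simp add: case_prod_unfold)
  then have "(INF \<omega> \<in> map_pmf prod.swap ` couplings (tau u) (tau v). measure_pmf.expectation \<omega> (\<lambda>(a,b). e a b))
      = (INF \<omega> \<in> couplings (tau u) (tau v). measure_pmf.expectation \<omega> (\<lambda>(a,b). e b a))"
    unfolding image_image by presburger
  then show ?thesis unfolding Delta_def img by (simp add: eq_commute[of "lab u"])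
qed

lemma d_sym: "bisim_dist tau lab u v = bisim_dist tau lab v u"
proof -
  have le: "bisim_dist tau lab x y \<le> bisim_dist tau lab y x" for x y
  proof -
    have "Delta tau lab (\<lambda>a b. bisim_dist tau lab b a) a b \<le> bisim_dist tau lab b a" for a b
      using Delta_swap[of "bisim_dist tau lab" a b] Delta_d[where tau=tau, OF fin, of lab b a] by simp
    then have "(\<lambda>a b. bisim_dist tau lab b a) \<in> Eset tau lab"
      using d_bounds[where tau=tau and lab=lab, OF fin] by (auto simp: Eset_def)
    then show ?thesis by (rule d_le[where tau=tau, OF fin])
  qed
  show ?thesis using le[of u v] le[of v u] by simp
qed

end




lemma l1_finite:
  assumes "finite N" "set_pmf p \<subseteq> N" "set_pmf q \<subseteq> N"
  shows "l1_dist p q = (\<Sum>x\<in>N. \<bar>pmf p x - pmf q x\<bar>)"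
proof -
  have z: "\<forall>x. x\<notin>N \<longrightarrow> pmf p x = 0 \<and> pmf q x = 0" using assms
    by (meson pmf_eq_0_set_pmf subsetD)
  have "l1_dist p q = infsum (\<lambda>x. \<bar>pmf p x - pmf q x\<bar>) N"
    unfolding l1_dist_def
    by (rule infsum_cong_neutral) (use z in auto)
  then show ?thesis using assms(1) by simp
qed

lemma coupling_diff_bound:
  fixes \<omega> :: "('a \<times> 'a) pmf" and c :: "'a set" and d :: "'a \<Rightarrow> 'a \<Rightarrow> real"
  assumes fin: "finite (set_pmf \<omega>)" and dpos: "\<delta> > 0" and dnn: "\<forall>a b. 0 \<le> d a b"
    and big: "\<forall>p\<in>set_pmf \<omega>. (fst p \<in> c) \<noteq> (snd p \<in> c) \<longrightarrow> \<delta> \<le> d (fst p) (snd p)"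
  shows "\<bar>measure (map_pmf fst \<omega>) c - measure (map_pmf snd \<omega>) c\<bar>
           \<le> measure_pmf.expectation \<omega> (\<lambda>(u,v). d u v) / \<delta>"
proof -
  define Z where "Z = {p. (fst p \<in> c) \<noteq> (snd p \<in> c)}"
  define S where "S = set_pmf \<omega>"
  have m1: "measure \<omega> (fst -` c) \<le> measure \<omega> (snd -` c) + measure \<omega> Z"
  proof -
    have "measure \<omega> (fst -` c) \<le> measure \<omega> (snd -` c \<union> Z)"
      by (rule measure_pmf.finite_measure_mono) (auto simp: Z_def)
    also have "\<dots> \<le> measure \<omega> (snd -` c) + measure \<omega> Z"
      by (rule measure_Un_le) auto
    finally show ?thesis .
  qed
  have m2: "measure \<omega> (snd -` c) \<le> measure \<omega> (fst -` c) + measure \<omega> Z"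
  proof -
    have "measure \<omega> (snd -` c) \<le> measure \<omega> (fst -` c \<union> Z)"
      by (rule measure_pmf.finite_measure_mono) (auto simp: Z_def)
    also have "\<dots> \<le> measure \<omega> (fst -` c) + measure \<omega> Z"
      by (rule measure_Un_le) auto
    finally show ?thesis .
  qed
  have "measure \<omega> Z = measure \<omega> (Z \<inter> S)" unfolding S_def by (simp add: measure_Int_set_pmf)
  also have "\<dots> = (\<Sum>p\<in>Z \<inter> S. pmf \<omega> p)" using fin unfolding S_def
    by (intro measure_measure_pmf_finite) auto
  finally have mZ: "measure \<omega> Z = (\<Sum>p\<in>Z \<inter> S. pmf \<omega> p)" .
  have E: "measure_pmf.expectation \<omega> (\<lambda>(u,v). d u v) = (\<Sum>p\<in>S. pmf \<omega> p * d (fst p) (snd p))"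
    using fin unfolding S_def by (subst integral_measure_pmf[of "set_pmf \<omega>"]) (auto simp: case_prod_unfold)
  have "\<delta> * measure \<omega> Z = (\<Sum>p\<in>Z \<inter> S. \<delta> * pmf \<omega> p)" unfolding mZ by (simp add: sum_distrib_left)
  also have "\<dots> \<le> (\<Sum>p\<in>Z \<inter> S. pmf \<omega> p * d (fst p) (snd p))"
  proof (rule sum_mono)
    fix p assume p: "p \<in> Z \<inter> S"
    then have "\<delta> \<le> d (fst p) (snd p)" using big unfolding S_def Z_def by auto
    then have "\<delta> * pmf \<omega> p \<le> d (fst p) (snd p) * pmf \<omega> p" by (intro mult_right_mono) auto
    then show "\<delta> * pmf \<omega> p \<le> pmf \<omega> p * d (fst p) (snd p)" by (simp add: mult.commute)
  qed
  also have "\<dots> \<le> (\<Sum>p\<in>S. pmf \<omega> p * d (fst p) (snd p))"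
    using fin dnn unfolding S_def by (intro sum_mono2) auto
  finally have "\<delta> * measure \<omega> Z \<le> measure_pmf.expectation \<omega> (\<lambda>(u,v). d u v)" using E by simp
  then have "measure \<omega> Z \<le> measure_pmf.expectation \<omega> (\<lambda>(u,v). d u v) / \<delta>"
    using dpos by (simp add: field_simps)
  then show ?thesis using m1 m2 by simp
qed




theorem mainTheorem12:
  fixes tau :: "nat \<Rightarrow> 'a::countable \<Rightarrow> 'a pmf"
    and lab :: "'a \<Rightarrow> 'l::finite"
    and Nb :: "'a \<Rightarrow> 'a set"
    and S0 :: "'a set"
  assumes fin_branch: "\<And>i s. finite (set_pmf (tau i s))"
    and Nb_fin: "\<And>s. finite (Nb s)"
    and Nb_supp: "\<And>i s. set_pmf (tau i s) \<subseteq> Nb s"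
    and S0_fin: "finite S0"
    and S0_ne: "S0 \<noteq> {}"
    and lim: "liminf (\<lambda>i. ereal (Max ((\<lambda>(s, t). bisim_dist (tau i) lab s t) ` (S0 \<times> S0)))) = 0"
  shows "\<exists>(\<tau> :: 'a \<Rightarrow> 'a pmf) (k :: nat) (P :: nat \<Rightarrow> 'a set) (\<mu> :: nat pmf).
           (\<forall>j\<in>{1..k}. P j \<noteq> {}) \<and>
           (\<forall>j\<in>{1..k}. \<forall>j'\<in>{1..k}. j \<noteq> j' \<longrightarrow> P j \<inter> P j' = {}) \<and>
           (\<Union>j\<in>{1..k}. P j) = (\<Union>s\<in>S0. Nb s) \<and>
           set_pmf \<mu> \<subseteq> {1..k} \<and>
           (\<forall>s\<in>S0. \<forall>j\<in>{1..k}. measure_pmf.prob (\<tau> s) (P j) = pmf \<mu> j) \<and>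
           liminf (\<lambda>i. ereal (Max (
               ((\<lambda>s. l1_dist (tau i s) (\<tau> s)) ` S0)
             \<union> ((\<lambda>(s, j). \<bar>measure_pmf.prob (tau i s) (P j) - pmf \<mu> j\<bar>) ` (S0 \<times> {1..k}))
             \<union> ((\<lambda>(j, u, v). bisim_dist (tau i) lab u v) ` (SIGMA j:{1..k}. P j \<times> P j))))) = 0"
proof -
  define d where "d = (\<lambda>i. bisim_dist (tau i) lab)"
  define N where "N = (\<Union>s\<in>S0. Nb s)"
  have finN: "finite N" unfolding N_def using S0_fin Nb_fin by auto
  have suppN: "s \<in> S0 \<Longrightarrow> set_pmf (tau i s) \<subseteq> N" for i s
    using Nb_supp unfolding N_def by blast
  have db: "0 \<le> d i u v \<and> d i u v \<le> 1" for i u v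
    unfolding d_def by (rule d_bounds[where tau="tau i" and lab=lab, OF fin_branch])
  have dsym: "d i u v = d i v u" for i u v
    unfolding d_def by (rule d_sym[where tau="tau i" and lab=lab, OF fin_branch])
  have drefl: "d i u u = 0" for i u
    unfolding d_def by (rule d_refl[where tau="tau i" and lab=lab, OF fin_branch])
  have dtri: "d i u w \<le> d i u v + d i v w" for i u v w
    unfolding d_def by (rule triangle[where tau="tau i" and lab=lab, OF fin_branch])
  have dapprox: "\<exists>\<omega>\<in>couplings (tau i s) (tau i t).
           measure_pmf.expectation \<omega> (\<lambda>(u,v). d i u v) \<le> d i s t + \<epsilon>" if "\<epsilon> > 0" for i s t \<epsilon>
    unfolding d_def by (rule approx[where tau="tau i" and lab=lab, OF fin_branch that])
  define M where "M = (\<lambda>i. Max ((\<lambda>(s, t). d i s t) ` (S0 \<times> S0)))"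
  have M_ge: "s \<in> S0 \<Longrightarrow> t \<in> S0 \<Longrightarrow> d i s t \<le> M i" for i s t
    unfolding M_def using S0_fin by (intro Max_ge) auto
  have "liminf (\<lambda>i. ereal (M i)) = 0" using lim by (simp add: M_def d_def)
  then obtain r0 where r0: "strict_mono r0" "((\<lambda>i. ereal (M i)) \<circ> r0) \<longlonglongrightarrow> 0"
    using liminf_subseq_lim[of "\<lambda>i. ereal (M i)"] by auto
  then have "(\<lambda>n. ereal (M (r0 n))) \<longlonglongrightarrow> ereal 0" by (simp add: o_def zero_ereal_def)
  then have Mr0: "(\<lambda>n. M (r0 n)) \<longlonglongrightarrow> 0" by (simp add: lim_ereal)
  define I where "I = Inl ` (S0 \<times> N) \<union> Inr ` (N \<times> N)"
  define F where "F = (\<lambda>j n. case j of Inl (s,x) \<Rightarrow> pmf (tau (r0 n) s) x | Inr (u,v) \<Rightarrow> d (r0 n) u v)"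
  have "finite I" unfolding I_def using S0_fin finN by auto
  moreover have "\<bar>F j n\<bar> \<le> 1" if "j \<in> I" for j n
    using db pmf_le_1 by (auto simp: F_def split: sum.splits)
  ultimately obtain r1 where r1: "strict_mono r1" "\<forall>j\<in>I. convergent (\<lambda>n. F j (r1 n))"
    using multi_subseq[of I F 1] by blast
  define r where "r = r0 \<circ> r1"
  have r: "strict_mono r" unfolding r_def using r0(1) r1(1) by (rule strict_mono_o)
  have conv_pmf: "convergent (\<lambda>n. pmf (tau (r n) s) x)" if "s \<in> S0" "x \<in> N" for s x
    using r1(2) that unfolding I_def F_def r_def by force
  have conv_d: "convergent (\<lambda>n. d (r n) u v)" if "u \<in> N" "v \<in> N" for u v
    using r1(2) that unfolding I_def F_def r_def by force
  have Mr: "(\<lambda>n. M (r n)) \<longlonglongrightarrow> 0"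
    using LIMSEQ_subseq_LIMSEQ[OF Mr0 r1(1)] unfolding r_def by (simp add: o_def)
  define P0 where "P0 = (\<lambda>s x. lim (\<lambda>n. pmf (tau (r n) s) x))"
  define D where "D = (\<lambda>u v. lim (\<lambda>n. d (r n) u v))"
  have P0lim: "(\<lambda>n. pmf (tau (r n) s) x) \<longlonglongrightarrow> P0 s x" if "s \<in> S0" "x \<in> N" for s x
    using conv_pmf[OF that] unfolding P0_def convergent_LIMSEQ_iff .
  have Dlim: "(\<lambda>n. d (r n) u v) \<longlonglongrightarrow> D u v" if "u \<in> N" "v \<in> N" for u v
    using conv_d[OF that] unfolding D_def convergent_LIMSEQ_iff .
  have Dnn: "0 \<le> D u v" if "u \<in> N" "v \<in> N" for u v
    using Dlim[OF that] db by (intro LIMSEQ_le_const) auto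
  have Drefl: "D u u = 0" if "u \<in> N" for u
    using Dlim[OF that that] by (simp add: drefl LIMSEQ_const_iff)
  have Dsym: "D u v = D v u" if "u \<in> N" "v \<in> N" for u v
    using Dlim[OF that] Dlim[OF that(2,1)] by (simp add: dsym LIMSEQ_unique)
  have Dtri: "D u w \<le> D u v + D v w" if "u \<in> N" "v \<in> N" "w \<in> N" for u v w
    using Dlim[OF that(1,3)] tendsto_add[OF Dlim[OF that(1,2)] Dlim[OF that(2,3)]] dtri
    by (intro LIMSEQ_le) auto
  have P0nn: "0 \<le> P0 s x" if "s \<in> S0" "x \<in> N" for s x
    using P0lim[OF that] by (intro LIMSEQ_le_const) auto
  have sumP0: "(\<Sum>x\<in>N. P0 s x) = 1" if s: "s \<in> S0" for s
  proof -
    have "(\<lambda>n. \<Sum>x\<in>N. pmf (tau (r n) s) x) \<longlonglongrightarrow> (\<Sum>x\<in>N. P0 s x)"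
      using P0lim[OF s] by (intro tendsto_sum) auto
    moreover have "(\<lambda>n. \<Sum>x\<in>N. pmf (tau (r n) s) x) = (\<lambda>n. 1)"
      using sum_pmf_eq_1[OF finN suppN[OF s]] by simp
    ultimately show ?thesis by (simp add: LIMSEQ_const_iff)
  qed
  have "\<forall>s\<in>S0. \<exists>p. \<forall>x. pmf p x = (if x \<in> N then P0 s x else 0)"
  proof
    fix s assume s: "s \<in> S0"
    show "\<exists>p. \<forall>x. pmf p x = (if x \<in> N then P0 s x else 0)"
      by (rule finite_pmf_exists[OF finN]) (use P0nn[OF s] sumP0[OF s] in auto)
  qed
  then obtain \<tau>' where \<tau>': "\<And>s x. s \<in> S0 \<Longrightarrow> pmf (\<tau>' s) x = (if x \<in> N then P0 s x else 0)"
    by metis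
  have \<tau>'N: "set_pmf (\<tau>' s) \<subseteq> N" if "s \<in> S0" for s
    using \<tau>'[OF that] by (auto simp: set_pmf_iff split: if_splits)
  have meas_lim: "(\<lambda>n. measure (tau (r n) s) A) \<longlonglongrightarrow> measure (\<tau>' s) A" if s: "s \<in> S0" and A: "A \<subseteq> N" for s A
  proof -
    have fA: "finite A" using A finN finite_subset by blast
    have "(\<lambda>n. \<Sum>x\<in>A. pmf (tau (r n) s) x) \<longlonglongrightarrow> (\<Sum>x\<in>A. P0 s x)"
      using P0lim[OF s] A by (intro tendsto_sum) auto
    moreover have "(\<Sum>x\<in>A. P0 s x) = measure (\<tau>' s) A"
      using \<tau>'[OF s] A fA by (simp add: measure_measure_pmf_finite subset_iff)
    ultimately show ?thesis using fA by (simp add: measure_measure_pmf_finite)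
  qed
  have l1_lim: "(\<lambda>n. l1_dist (tau (r n) s) (\<tau>' s)) \<longlonglongrightarrow> 0" if s: "s \<in> S0" for s
  proof -
    have "(\<lambda>n. \<Sum>x\<in>N. \<bar>pmf (tau (r n) s) x - pmf (\<tau>' s) x\<bar>) \<longlonglongrightarrow> (\<Sum>x\<in>N. \<bar>P0 s x - P0 s x\<bar>)"
      using P0lim[OF s] \<tau>'[OF s] by (intro tendsto_sum tendsto_rabs tendsto_diff) auto
    then show ?thesis using l1_finite[OF finN suppN[OF s] \<tau>'N[OF s]] by simp
  qed
  define cls where "cls = (\<lambda>u. {v\<in>N. D u v = 0})"
  define C where "C = cls ` N"
  have cls_self: "u \<in> cls u" if "u \<in> N" for u using that Drefl by (auto simp: cls_def)
  have cls_eq: "cls v = cls u" if uN: "u \<in> N" and vc: "v \<in> cls u" for u v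
  proof -
    have v: "v \<in> N" "D u v = 0" using vc by (auto simp: cls_def)
    have "D v w = 0 \<longleftrightarrow> D u w = 0" if w: "w \<in> N" for w
      using Dtri[OF uN v(1) w] Dtri[OF v(1) uN w] Dsym[OF uN v(1)] Dnn[OF uN w] Dnn[OF v(1) w] v(2)
      by linarith
    then show ?thesis by (auto simp: cls_def)
  qed
  have C_in: "c = cls x" if "c \<in> C" "x \<in> c" for c x
    using that cls_eq by (auto simp: C_def)
  have clsN: "cls u \<subseteq> N" for u by (auto simp: cls_def)
  have finC: "finite C" unfolding C_def using finN by simp
  obtain cs where cs: "set cs = C" "distinct cs" using finite_distinct_list[OF finC] by blast
  define k where "k = length cs"
  define P where "P = (\<lambda>j. cs ! (j - 1))"
  have PC: "P j \<in> C" if "j \<in> {1..k}" for j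
    using that cs(1) unfolding P_def k_def by auto
  have PN: "P j \<subseteq> N" if "j \<in> {1..k}" for j using PC[OF that] clsN by (auto simp: C_def)
  have Cex: "\<exists>j\<in>{1..k}. P j = c" if "c \<in> C" for c
  proof -
    have "c \<in> set cs" using that cs(1) by simp
    then obtain i where "i < length cs" "cs ! i = c" by (auto simp: in_set_conv_nth)
    then show ?thesis unfolding P_def k_def by (intro bexI[of _ "Suc i"]) auto
  qed
  have Pdisj: "P j \<inter> P j' = {}" if "j \<in> {1..k}" "j' \<in> {1..k}" "j \<noteq> j'" for j j'
  proof (rule ccontr)
    assume "P j \<inter> P j' \<noteq> {}"
    then obtain x where "x \<in> P j" "x \<in> P j'" by blast
    then have "P j = P j'" using C_in PC that by metis
    then have "j - 1 = j' - 1" using cs(2) that unfolding P_def k_def by (auto simp: nth_eq_iff_index_eq)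
    then show False using that by auto
  qed
  have Pne: "P j \<noteq> {}" if "j \<in> {1..k}" for j
    using PC[OF that] cls_self by (auto simp: C_def)
  have Punion: "(\<Union>j\<in>{1..k}. P j) = N"
  proof
    show "(\<Union>j\<in>{1..k}. P j) \<subseteq> N" using PN by blast
    show "N \<subseteq> (\<Union>j\<in>{1..k}. P j)"
    proof
      fix x assume x: "x \<in> N"
      then obtain j where "j \<in> {1..k}" "P j = cls x" using Cex[of "cls x"] by (auto simp: C_def)
      then show "x \<in> (\<Union>j\<in>{1..k}. P j)" using cls_self[OF x] by blast
    qed
  qed
  have key: "measure (\<tau>' s) c = measure (\<tau>' t) c" if s: "s \<in> S0" and t: "t \<in> S0" and c: "c \<in> C" for s t c
  proof -
    have cN: "c \<subseteq> N" using c clsN by (auto simp: C_def)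
    define pos where "pos = {p \<in> N \<times> N. D (fst p) (snd p) > 0}"
    have finpos: "finite pos" unfolding pos_def using finN by (auto intro: finite_subset[of _ "N \<times> N"])
    define \<delta> where "\<delta> = Min (insert 1 ((\<lambda>p. D (fst p) (snd p) / 2) ` pos))"
    have \<delta>pos: "\<delta> > 0" unfolding \<delta>_def using finpos by (auto simp: pos_def)
    have \<delta>le: "\<delta> \<le> D (fst p) (snd p) / 2" if "p \<in> pos" for p
      unfolding \<delta>_def using finpos that by (intro Min_le) auto
    have ev: "eventually (\<lambda>n. \<forall>p\<in>pos. \<delta> \<le> d (r n) (fst p) (snd p)) sequentially"
    proof (rule eventually_ball_finite[OF finpos], rule ballI)
      fix p assume p: "p \<in> pos"
      then have pN: "fst p \<in> N" "snd p \<in> N" and Dp: "D (fst p) (snd p) > 0" by (auto simp: pos_def)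
      have "eventually (\<lambda>n. D (fst p) (snd p) / 2 < d (r n) (fst p) (snd p)) sequentially"
        using Dp by (intro order_tendstoD(1)[OF Dlim[OF pN]]) auto
      then show "eventually (\<lambda>n. \<delta> \<le> d (r n) (fst p) (snd p)) sequentially"
        by eventually_elim (use \<delta>le[OF p] in auto)
    qed
    have "\<forall>n. \<exists>\<omega>. \<omega> \<in> couplings (tau (r n) s) (tau (r n) t) \<and>
           measure_pmf.expectation \<omega> (\<lambda>(u,v). d (r n) u v) \<le> d (r n) s t + inverse (real (Suc n))"
      using dapprox by (metis inverse_positive_iff_positive of_nat_0_less_iff zero_less_Suc)
    then obtain \<omega> where \<omega>: "\<And>n. \<omega> n \<in> couplings (tau (r n) s) (tau (r n) t)"
      "\<And>n. measure_pmf.expectation (\<omega> n) (\<lambda>(u,v). d (r n) u v) \<le> d (r n) s t + inverse (real (Suc n))"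
      by metis
    define g where "g = (\<lambda>n. (M (r n) + inverse (real (Suc n))) / \<delta>)"
    have glim: "g \<longlonglongrightarrow> 0" unfolding g_def
      by (intro tendsto_divide_zero tendsto_add_zero Mr LIMSEQ_inverse_real_of_nat)
    have bound: "eventually (\<lambda>n. norm (measure (tau (r n) s) c - measure (tau (r n) t) c) \<le> g n) sequentially"
      using ev
    proof eventually_elim
      case (elim n)
      have w: "\<omega> n \<in> couplings (tau (r n) s) (tau (r n) t)" by (rule \<omega>(1))
      have m: "map_pmf fst (\<omega> n) = tau (r n) s" "map_pmf snd (\<omega> n) = tau (r n) t"
        using w by (auto simp: couplings_def)
      have sub: "set_pmf (\<omega> n) \<subseteq> N \<times> N"
        using coup_set[OF w] suppN[OF s] suppN[OF t] by blast
      have big: "\<forall>p\<in>set_pmf (\<omega> n). (fst p \<in> c) \<noteq> (snd p \<in> c) \<longrightarrow> \<delta> \<le> d (r n) (fst p) (snd p)"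
      proof (intro ballI impI)
        fix p assume p: "p \<in> set_pmf (\<omega> n)" and x: "(fst p \<in> c) \<noteq> (snd p \<in> c)"
        have pN: "fst p \<in> N" "snd p \<in> N" using p sub by auto
        have "D (fst p) (snd p) \<noteq> 0"
        proof
          assume D0: "D (fst p) (snd p) = 0"
          show False
          proof (cases "fst p \<in> c")
            case True
            then have "c = cls (fst p)" using C_in[OF c] by blast
            then have "snd p \<in> c" using D0 pN by (auto simp: cls_def)
            then show False using x True by blast
          next
            case False
            then have sc: "snd p \<in> c" using x by blast
            then have "c = cls (snd p)" using C_in[OF c] by blast
            then have "fst p \<in> c" using D0 pN Dsym[OF pN] by (auto simp: cls_def)
            then show False using False by blast
          qed
        qed
        then have "p \<in> pos" using Dnn[OF pN] pN by (cases p) (auto simp: pos_def)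
        then show "\<delta> \<le> d (r n) (fst p) (snd p)" using elim by blast
      qed
      have "\<bar>measure (map_pmf fst (\<omega> n)) c - measure (map_pmf snd (\<omega> n)) c\<bar>
           \<le> measure_pmf.expectation (\<omega> n) (\<lambda>(u,v). d (r n) u v) / \<delta>"
        by (rule coupling_diff_bound[OF coup_fin[OF w fin_branch fin_branch] \<delta>pos _ big])
           (use db in auto)
      also have "\<dots> \<le> (M (r n) + inverse (real (Suc n))) / \<delta>"
        using \<omega>(2)[of n] M_ge[OF s t, of "r n"] \<delta>pos by (intro divide_right_mono) auto
      finally show ?case unfolding g_def m by simp
    qed
    have "(\<lambda>n. measure (tau (r n) s) c - measure (tau (r n) t) c) \<longlonglongrightarrow> 0"
      by (rule Lim_null_comparison[OF bound glim])
    moreover have "(\<lambda>n. measure (tau (r n) s) c - measure (tau (r n) t) c) \<longlonglongrightarrow> measure (\<tau>' s) c - measure (\<tau>' t) c"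
      by (intro tendsto_diff meas_lim s t cN)
    ultimately have "measure (\<tau>' s) c - measure (\<tau>' t) c = 0" using LIMSEQ_unique by blast
    then show ?thesis by simp
  qed
  obtain s0 where s0: "s0 \<in> S0" using S0_ne by blast
  define idx where "idx = (\<lambda>x. SOME j. j \<in> {1..k} \<and> x \<in> P j)"
  have idx: "idx x \<in> {1..k} \<and> x \<in> P (idx x)" if "x \<in> N" for x
  proof -
    have "\<exists>j. j \<in> {1..k} \<and> x \<in> P j" using that Punion by blast
    then show ?thesis unfolding idx_def by (rule someI_ex)
  qed
  define \<mu> where "\<mu> = map_pmf idx (\<tau>' s0)"
  have mu_set: "set_pmf \<mu> \<subseteq> {1..k}" unfolding \<mu>_def using idx \<tau>'N[OF s0] by auto
  have mu_pmf: "pmf \<mu> j = measure (\<tau>' s0) (P j)" if j: "j \<in> {1..k}" for j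
  proof -
    have "pmf \<mu> j = measure (\<tau>' s0) (idx -` {j})" unfolding \<mu>_def by (rule pmf_map)
    also have "\<dots> = measure (\<tau>' s0) (idx -` {j} \<inter> set_pmf (\<tau>' s0))" by (simp add: measure_Int_set_pmf)
    also have "idx -` {j} \<inter> set_pmf (\<tau>' s0) = P j \<inter> set_pmf (\<tau>' s0)"
    proof -
      have "idx x = j \<longleftrightarrow> x \<in> P j" if "x \<in> N" for x
        using idx[OF that] Pdisj[OF j] by blast
      then show ?thesis using \<tau>'N[OF s0] by auto
    qed
    also have "measure (\<tau>' s0) (P j \<inter> set_pmf (\<tau>' s0)) = measure (\<tau>' s0) (P j)" by (simp add: measure_Int_set_pmf)
    finally show ?thesis .
  qed
  have prob_eq: "measure (\<tau>' s) (P j) = pmf \<mu> j" if "s \<in> S0" "j \<in> {1..k}" for s j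
    using key[OF that(1) s0 PC[OF that(2)]] mu_pmf[OF that(2)] by simp
  define Yset where "Yset = (\<lambda>i. 
               ((\<lambda>s. l1_dist (tau i s) (\<tau>' s)) ` S0)
             \<union> ((\<lambda>(s, j). \<bar>measure_pmf.prob (tau i s) (P j) - pmf \<mu> j\<bar>) ` (S0 \<times> {1..k}))
             \<union> ((\<lambda>(j, u, v). d i u v) ` (SIGMA j:{1..k}. P j \<times> P j)))"
  define Y where "Y = (\<lambda>i. Max (Yset i))"
  have finSig: "finite (SIGMA j:{1..k}. P j \<times> P j)"
    using PN finN by (intro finite_SigmaI) (auto intro: finite_subset)
  have finY: "finite (Yset i)" for i unfolding Yset_def using S0_fin finSig by auto
  have inY: "l1_dist (tau i s0) (\<tau>' s0) \<in> Yset i" for i unfolding Yset_def using s0 by blast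
  have neY: "Yset i \<noteq> {}" for i using inY by blast
  have Y_nn: "0 \<le> Y i" for i
  proof -
    have "0 \<le> l1_dist (tau i s0) (\<tau>' s0)" unfolding l1_dist_def by (intro infsum_nonneg) auto
    also have "\<dots> \<le> Y i" unfolding Y_def by (rule Max_ge[OF finY inY])
    finally show ?thesis .
  qed
  have Y_lim: "(\<lambda>n. Y (r n)) \<longlonglongrightarrow> 0"
  proof (rule order_tendstoI)
    fix a :: real assume "a < 0"
    then have "\<forall>n. a < Y (r n)" using Y_nn by (auto intro: less_le_trans)
    then show "eventually (\<lambda>n. a < Y (r n)) sequentially" by (simp add: always_eventually)
  next
    fix a :: real assume a: "0 < a"
    have e1: "eventually (\<lambda>n. \<forall>s\<in>S0. l1_dist (tau (r n) s) (\<tau>' s) < a) sequentially"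
      using S0_fin by (intro eventually_ball_finite ballI order_tendstoD(2)[OF l1_lim a])
    have e2: "eventually (\<lambda>n. \<forall>p\<in>S0 \<times> {1..k}. \<bar>measure (tau (r n) (fst p)) (P (snd p)) - pmf \<mu> (snd p)\<bar> < a) sequentially"
    proof (intro eventually_ball_finite ballI)
      show "finite (S0 \<times> {1..k})" using S0_fin by simp
      fix p assume p: "p \<in> S0 \<times> {1..k}"
      have "(\<lambda>n. \<bar>measure (tau (r n) (fst p)) (P (snd p)) - pmf \<mu> (snd p)\<bar>) \<longlonglongrightarrow>
             \<bar>measure (\<tau>' (fst p)) (P (snd p)) - pmf \<mu> (snd p)\<bar>"
        using p PN[of "snd p"] by (intro tendsto_rabs tendsto_diff meas_lim tendsto_const) auto
      moreover have "\<bar>measure (\<tau>' (fst p)) (P (snd p)) - pmf \<mu> (snd p)\<bar> = 0"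
        using prob_eq p by auto
      ultimately show "eventually (\<lambda>n. \<bar>measure (tau (r n) (fst p)) (P (snd p)) - pmf \<mu> (snd p)\<bar> < a) sequentially"
        using a by (metis order_tendstoD(2))
    qed
    have e3: "eventually (\<lambda>n. \<forall>q\<in>(SIGMA j:{1..k}. P j \<times> P j). d (r n) (fst (snd q)) (snd (snd q)) < a) sequentially"
    proof (intro eventually_ball_finite[OF finSig] ballI)
      fix q assume q: "q \<in> (SIGMA j:{1..k}. P j \<times> P j)"
      then obtain j u v where q': "q = (j,u,v)" "j \<in> {1..k}" "u \<in> P j" "v \<in> P j" by auto
      have "P j = cls u" using C_in[OF PC[OF q'(2)] q'(3)] .
      then have uv: "u \<in> N" "v \<in> N" "D u v = 0" using q'(4) PN[OF q'(2)] q'(3) by (auto simp: cls_def)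
      show "eventually (\<lambda>n. d (r n) (fst (snd q)) (snd (snd q)) < a) sequentially"
        using order_tendstoD(2)[OF Dlim[OF uv(1,2)]] uv(3) a q'(1) by auto
    qed
    show "eventually (\<lambda>n. Y (r n) < a) sequentially"
      using e1 e2 e3
    proof eventually_elim
      case (elim n)
      show ?case unfolding Y_def Max_less_iff[OF finY neY]
        using elim unfolding Yset_def by fastforce
    qed
  qed
  have "liminf (\<lambda>i. ereal (Y i)) = 0"
  proof (rule antisym)
    have "liminf (\<lambda>i. ereal (Y i)) \<le> liminf ((\<lambda>i. ereal (Y i)) \<circ> r)" by (rule liminf_subseq_mono[OF r])
    also have "\<dots> = 0"
    proof (rule lim_imp_Liminf)
      show "((\<lambda>i. ereal (Y i)) \<circ> r) \<longlonglongrightarrow> 0"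
        using Y_lim by (simp add: o_def zero_ereal_def lim_ereal)
    qed simp
    finally show "liminf (\<lambda>i. ereal (Y i)) \<le> 0" .
    show "0 \<le> liminf (\<lambda>i. ereal (Y i))" using Y_nn by (intro Liminf_bounded) auto
  qed
  then show ?thesis
    using Pne Pdisj Punion mu_set prob_eq unfolding Y_def Yset_def d_def N_def
    by (intro exI[of _ \<tau>'] exI[of _ k] exI[of _ P] exI[of _ \<mu>]) auto
qed


end
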